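(* Let $d$ be a positive integer and let $\omega_N\subset\mathbb{S}^{d-1}$ be a set of $N$ distinct points. Assume that for any three distinct points $x,y,z\in\omega_N$, $$\langle x,y\rangle\langle x,z\rangle\langle y,z\rangle<0.$$ Then $N\le d+1$.
   Context: $\langle\cdot,\cdot\rangle$ is the Euclidean inner product and $\mathbb{S}^{d-1}$ is the unit sphere in $\mathbb{R}^d$. *)

theory Defs
  imports "HOL-Analysis.Analysis"
begin

end

theory Submission
  imports Defs
begin

lemma neg_lemma:
  fixes w :: "'b \<Rightarrow> 'a::euclidean_space"
  assumes fin: "finite T" and kT: "k \<notin> T"
    and neg: "\<And>x y. x \<in> insert k T \<Longrightarrow> y \<in> insert k T \<Longrightarrow> x \<noteq> y \<Longrightarrow> w x \<bullet> w y < 0"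
    and s0: "(\<Sum>x\<in>T. a x *\<^sub>R w x) = 0"
  shows "\<forall>x\<in>T. a x = 0"
proof -
  define P where "P = {x\<in>T. a x > 0}"
  define Q where "Q = {x\<in>T. a x < 0}"
  define u where "u = (\<Sum>x\<in>P. a x *\<^sub>R w x)"
  have finP: "finite P" "finite Q" using fin by (auto simp: P_def Q_def)
  have "(\<Sum>x\<in>T. a x *\<^sub>R w x) = (\<Sum>x\<in>T \<inter> P. a x *\<^sub>R w x) + (\<Sum>x\<in>T - P. a x *\<^sub>R w x)"
    using fin by (simp add: sum.Int_Diff)
  also have "T \<inter> P = P" by (auto simp: P_def)
  also have "(\<Sum>x\<in>T - P. a x *\<^sub>R w x) = (\<Sum>x\<in>Q. a x *\<^sub>R w x)"
    by (rule sum.mono_neutral_right) (use fin in \<open>auto simp: P_def Q_def\<close>)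
  finally have uQ: "(\<Sum>x\<in>Q. a x *\<^sub>R w x) = - u" using s0 unfolding u_def
    by (simp add: add_eq_0_iff)
  have "u \<bullet> u = - (u \<bullet> (\<Sum>x\<in>Q. a x *\<^sub>R w x))" using uQ by simp
  also have "u \<bullet> (\<Sum>x\<in>Q. a x *\<^sub>R w x) = (\<Sum>x\<in>P. \<Sum>y\<in>Q. a x * a y * (w x \<bullet> w y))"
    unfolding u_def
    apply (simp add: inner_sum_left inner_sum_right sum_distrib_left mult.assoc)
    apply (subst sum.swap)
    apply (simp add: mult.left_commute)
    done
  also have "(\<Sum>x\<in>P. \<Sum>y\<in>Q. a x * a y * (w x \<bullet> w y)) \<ge> 0"
  proof (intro sum_nonneg)
    fix x y assume x: "x \<in> P" and y: "y \<in> Q"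
    have "x \<noteq> y" using x y by (auto simp: P_def Q_def)
    hence "w x \<bullet> w y < 0" using x y neg by (auto simp: P_def Q_def)
    moreover have "a x * a y < 0" using x y by (auto simp: P_def Q_def mult_pos_neg)
    ultimately show "0 \<le> a x * a y * (w x \<bullet> w y)"
      by (simp add: zero_le_mult_iff)
  qed
  hence "u \<bullet> u \<le> 0" using calculation by linarith
  hence u0: "u = 0" by (metis inner_ge_zero order_antisym inner_eq_zero_iff)
  have Pe: "P = {}"
  proof (rule ccontr)
    assume "P \<noteq> {}"
    have "w k \<bullet> u = (\<Sum>x\<in>P. a x * (w k \<bullet> w x))" unfolding u_def by (simp add: inner_sum_right)
    also have "\<dots> < 0"
    proof -
      have "(\<Sum>x\<in>P. - (a x * (w k \<bullet> w x))) > 0"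
      proof (rule sum_pos)
        fix x assume x: "x \<in> P"
        have "x \<noteq> k" using x kT by (auto simp: P_def)
        hence "w k \<bullet> w x < 0" using x neg by (auto simp: P_def)
        thus "- (a x * (w k \<bullet> w x)) > 0" using x by (auto simp: P_def mult_pos_neg)
      qed (use finP \<open>P \<noteq> {}\<close> in auto)
      thus ?thesis by (simp add: sum_negf)
    qed
    finally show False using u0 by simp
  qed
  have Qe: "Q = {}"
  proof (rule ccontr)
    assume "Q \<noteq> {}"
    have "w k \<bullet> (\<Sum>x\<in>Q. a x *\<^sub>R w x) = (\<Sum>x\<in>Q. a x * (w k \<bullet> w x))" by (simp add: inner_sum_right)
    also have "\<dots> > 0"
    proof (rule sum_pos)
      fix x assume x: "x \<in> Q"
      have "x \<noteq> k" using x kT by (auto simp: Q_def)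
      hence "w k \<bullet> w x < 0" using x neg by (auto simp: Q_def)
      thus "a x * (w k \<bullet> w x) > 0" using x by (auto simp: Q_def mult_neg_neg)
    qed (use finP \<open>Q \<noteq> {}\<close> in auto)
    finally show False using u0 uQ by simp
  qed
  show ?thesis using Pe Qe by (auto simp: P_def Q_def) (meson linorder_neqE_linordered_idom)
qed

theorem theorem3p3:
  fixes W :: "'a::euclidean_space set"
  assumes "finite W"
    and "W \<subseteq> sphere 0 1"
    and "\<And>x y z. x \<in> W \<Longrightarrow> y \<in> W \<Longrightarrow> z \<in> W \<Longrightarrow> x \<noteq> y \<Longrightarrow> x \<noteq> z \<Longrightarrow> y \<noteq> z
           \<Longrightarrow> (x \<bullet> y) * (x \<bullet> z) * (y \<bullet> z) < 0"
  shows "card W \<le> DIM('a) + 1"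
proof (rule ccontr)
  assume "\<not> ?thesis"
  hence big: "card W \<ge> DIM('a) + 2" by simp
  have D1: "DIM('a) \<ge> 1" using DIM_positive by (simp add: Suc_le_eq)
  have nz: "x \<bullet> y \<noteq> 0" if "x \<in> W" "y \<in> W" "x \<noteq> y" for x y
  proof -
    have "card (W - {x, y}) = card W - 2" using that assms(1)
      by (simp add: card_Diff_subset)
    hence "card (W - {x, y}) \<ge> 1" using big D1 by linarith
    hence "W - {x, y} \<noteq> {}" by (metis card.empty not_one_le_zero)
    then obtain z where "z \<in> W" "z \<noteq> x" "z \<noteq> y" by auto
    with assms(3)[of x y z] that show ?thesis by auto
  qed
  have "W \<noteq> {}" using big by auto
  then obtain w0 where w0: "w0 \<in> W" by auto
  define s where "s x = (if x = w0 then 1 else - sgn (w0 \<bullet> x))" for x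
  define w where "w x = s x *\<^sub>R x" for x
  have sq: "s x * s x = 1" if "x \<in> W" for x
    using nz[OF w0 that] by (auto simp: s_def sgn_if)
  have neg: "w x \<bullet> w y < 0" if "x \<in> W" "y \<in> W" "x \<noteq> y" for x y
  proof -
    have "w x \<bullet> w y = s x * s y * (x \<bullet> y)" by (simp add: w_def)
    also have "\<dots> < 0"
    proof (cases "x = w0")
      case True
      then show ?thesis using that nz[OF w0, of y] 
        by (auto simp: s_def sgn_if mult_less_0_iff)
    next
      case False
      note xF = False
      show ?thesis
      proof (cases "y = w0")
        case True
        then show ?thesis using that nz[OF w0, of x] xF
          by (auto simp: s_def sgn_if mult_less_0_iff inner_commute)
      next
        case False
        have "(w0 \<bullet> x) * (w0 \<bullet> y) * (x \<bullet> y) < 0" using assms(3)[OF w0 that(1,2)] xF False that by auto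
        then show ?thesis using xF False
          by (auto simp: s_def sgn_if mult_less_0_iff zero_less_mult_iff)
      qed
    qed
    finally show ?thesis .
  qed
  obtain k T where k: "k \<in> W" and TW: "T \<subseteq> W - {k}" and cT: "card T = DIM('a) + 1"
  proof -
    from w0 have "card (W - {w0}) \<ge> DIM('a) + 1" using big assms(1) by simp
    then obtain T where "T \<subseteq> W - {w0}" "card T = DIM('a) + 1"
      using obtain_subset_with_card_n by metis
    then show ?thesis using that w0 by blast
  qed
  have finT: "finite T" using TW assms(1) finite_subset by blast
  have "dependent T"
  proof (rule ccontr)
    assume "\<not> dependent T"
    then have "card T \<le> DIM('a)" using independent_bound by blast
    then show False using cT by simp
  qed
  then obtain c where c1: "\<exists>v\<in>T. c v \<noteq> 0" and c0: "(\<Sum>v\<in>T. c v *\<^sub>R v) = 0"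
    using dependent_finite[OF finT] by blast
  define a where "a x = c x * s x" for x
  have "(\<Sum>x\<in>T. a x *\<^sub>R w x) = (\<Sum>x\<in>T. c x *\<^sub>R x)"
  proof (rule sum.cong)
    fix x assume "x \<in> T"
    hence "s x * s x = 1" using sq TW by auto
    thus "a x *\<^sub>R w x = c x *\<^sub>R x" by (simp add: a_def w_def mult.assoc)
  qed simp
  hence "(\<Sum>x\<in>T. a x *\<^sub>R w x) = 0" using c0 by simp
  moreover have "k \<notin> T" using TW by auto
  moreover have "\<And>x y. x \<in> insert k T \<Longrightarrow> y \<in> insert k T \<Longrightarrow> x \<noteq> y \<Longrightarrow> w x \<bullet> w y < 0"
    using neg k TW by blast
  ultimately have "\<forall>x\<in>T. a x = 0" using neg_lemma[OF finT] by blast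
  moreover have "\<forall>x\<in>T. s x \<noteq> 0" using sq TW by fastforce
  ultimately show False using c1 by (auto simp: a_def)
qed

end
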